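(* Let $\mathcal{E}_0=(E_0,\mathsf{Con}_0,\vdash_0)$ and $\mathcal{E}_1=(E_1,\mathsf{Con}_1,\vdash_1)$ be reversible event structures, and define $\mathcal{E}_0+\mathcal{E}_1=(E,\mathsf{Con},\vdash)$ as follows: - $E=\{(0,e)\mid e\in E_0\}\cup\{(1,e)\mid e\in E_1\}$, with injections $i_j:E_j\to E$, $i_j(e)=(j,e)$ for $j\in\{0,1\}$. - $X\in\mathsf{Con}$ iff $X=i_0(X_0)$ for some $X_0\in\mathsf{Con}_0$ or $X=i_1(X_1)$ for some $X_1\in\mathsf{Con}_1$. - $X\oslash Y\vdash(j,e)^*$ iff there are $X_j,Y_j\subseteq E_j$ with $X_j\oslash Y_j\vdash_j e^*$, $X=i_j(X_j)$, and $Y=i_j(Y_j)\cup(E\setminus i_j(E_j))$. Then $\mathcal{E}_0+\mathcal{E}_1$ is an RES, $i_0$ and $i_1$ are RES-morphisms, and $(\mathcal{E}_0+\mathcal{E}_1,i_0,i_1)$ is a coproduct of $\mathcal{E}_0$ and $\mathcal{E}_1$ in the category $\mathbf{RES}$.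
   Context: **Notation.** For a set $E$, write $\underline{E}=\{\underline{e}\mid e\in E\}$ for a disjoint set of formal "reversal" copies. $e^*$ denotes either $e$ (performing $e$) or $\underline{e}$ (reversing $e$); $(j,e)^*$ is $(j,e)$ or $\underline{(j,e)}$ correspondingly. For a partial function $f$ and a set $X$, write $f(X)=\{f(x)\mid x\in X,\ f(x)\text{ defined}\}$. $\bot$ denotes undefined. Writing $f(e)^*$ means $f(e)$ if $e^*=e$ and $\underline{f(e)}$ if $e^*=\underline{e}$. **Reversible event structures.** A reversible event structure (RES) is a triple $(E,\mathsf{Con},\vdash)$ where: - $E$ is a set of events. - $\mathsf{Con}$ is a set of finite subsets of $E$, closed under subsets. - ${\vdash}\subseteq\mathsf{Con}\times 2^E\times(E\cup\underline{E})$ is the enabling relation. We write $X\oslash Y\vdash e^*$ for $(X,Y,e^* )\in{\vdash}$. - The following axioms hold: 1. If $X\oslash Y\vdash e^*$ then $(X\cup\{e\})\cap Y=\emptyset$. 2. If $X\oslash Y\vdash\underline{e}$ then $e\in X$. 3. If $X\oslash Y\vdash e^*$, $X\subseteq X'\in\mathsf{Con}$ and $X'\cap Y=\emptyset$, then $X'\oslash Y\vdash e^*$. **RES-morphisms.** An RES-morphism $f:(E_0,\mathsf{Con}_0,\vdash_0)\to(E_1,\mathsf{Con}_1,\vdash_1)$ is a partial function $f:E_0\rightharpoonup E_1$ such that: - whenever $f(e)\neq\bot$ and $X\oslash Y\vdash_0 e^*$, there exists $Y_1\subseteq E_1$ such that every $e_0\in E_0$ with $f(e_0)\in Y_1$ lies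 in $Y$, and $f(X)\oslash Y_1\vdash_1 f(e)^*$; - for every $X_0\in\mathsf{Con}_0$, $f(X_0)\in\mathsf{Con}_1$; - if $f(e)=f(e')\neq\bot$ and $e\neq e'$, then no $X\in\mathsf{Con}_0$ contains both $e$ and $e'$. $\mathbf{RES}$ is the category of RESs and RES-morphisms, with composition of partial functions. *)

theory Defs
  imports Main
begin

text \<open>Performing (Fwd e) or reversing (Rev e, i.e. underline e) an event.\<close>
datatype 'a act = Fwd 'a | Rev 'a

fun act_ev :: "'a act \<Rightarrow> 'a" where
  "act_ev (Fwd e) = e"
| "act_ev (Rev e) = e"

text \<open>A reversible event structure: events, consistency, enabling relation
  (triples (X, Y, e*) meaning X \<oslash> Y \<turnstile> e*).\<close>
record 'a res =
  ev  :: "'a set"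
  con :: "'a set set"
  en  :: "('a set \<times> 'a set \<times> 'a act) set"

definition is_res :: "'a res \<Rightarrow> bool" where
  "is_res R \<longleftrightarrow>
     (\<forall>X\<in>con R. finite X \<and> X \<subseteq> ev R) \<and>
     (\<forall>X\<in>con R. \<forall>Z. Z \<subseteq> X \<longrightarrow> Z \<in> con R) \<and>
     (\<forall>X Y a. (X, Y, a) \<in> en R \<longrightarrow> X \<in> con R \<and> Y \<subseteq> ev R \<and> act_ev a \<in> ev R) \<and>
     (\<forall>X Y a. (X, Y, a) \<in> en R \<longrightarrow> (X \<union> {act_ev a}) \<inter> Y = {}) \<and>
     (\<forall>X Y e. (X, Y, Rev e) \<in> en R \<longrightarrow> e \<in> X) \<and>
     (\<forall>X Y a X'. (X, Y, a) \<in> en R \<longrightarrow> X \<subseteq> X' \<longrightarrow> X' \<in> con R \<longrightarrow> X' \<inter> Y = {}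
        \<longrightarrow> (X', Y, a) \<in> en R)"

definition pimg :: "('a \<Rightarrow> 'b option) \<Rightarrow> 'a set \<Rightarrow> 'b set" where
  "pimg f X = {y. \<exists>x\<in>X. f x = Some y}"

text \<open>f(e)* : apply f to the event of an action (only used when f e is defined).\<close>
definition act_img :: "('a \<Rightarrow> 'b option) \<Rightarrow> 'a act \<Rightarrow> 'b act" where
  "act_img f a = map_act (\<lambda>x. the (f x)) a"

definition res_morph :: "'a res \<Rightarrow> 'b res \<Rightarrow> ('a \<Rightarrow> 'b option) \<Rightarrow> bool" where
  "res_morph R0 R1 f \<longleftrightarrow>
     (\<forall>x. x \<notin> ev R0 \<longrightarrow> f x = None) \<and>
     (\<forall>x y. f x = Some y \<longrightarrow> y \<in> ev R1) \<and>
     (\<forall>X Y a. (X, Y, a) \<in> en R0 \<longrightarrow> f (act_ev a) \<noteq> None \<longrightarrow>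
        (\<exists>Y1. Y1 \<subseteq> ev R1 \<and>
              (\<forall>e0\<in>ev R0. (\<exists>y\<in>Y1. f e0 = Some y) \<longrightarrow> e0 \<in> Y) \<and>
              (pimg f X, Y1, act_img f a) \<in> en R1)) \<and>
     (\<forall>X0\<in>con R0. pimg f X0 \<in> con R1) \<and>
     (\<forall>e e'. f e = f e' \<longrightarrow> f e \<noteq> None \<longrightarrow> e \<noteq> e' \<longrightarrow>
        \<not> (\<exists>X\<in>con R0. e \<in> X \<and> e' \<in> X))"

text \<open>The sum E0 + E1; tagged events (0,e),(1,e) are Inl e, Inr e.\<close>
definition sum_res :: "'a res \<Rightarrow> 'b res \<Rightarrow> ('a + 'b) res" where
  "sum_res R0 R1 =
    (let E = Inl ` ev R0 \<union> Inr ` ev R1 in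
     \<lparr> ev = E,
       con = {Inl ` X0 | X0. X0 \<in> con R0} \<union> {Inr ` X1 | X1. X1 \<in> con R1},
       en = {(Inl ` X0, Inl ` Y0 \<union> (E - Inl ` ev R0), map_act Inl a) | X0 Y0 a.
                X0 \<subseteq> ev R0 \<and> Y0 \<subseteq> ev R0 \<and> (X0, Y0, a) \<in> en R0}
          \<union> {(Inr ` X1, Inr ` Y1 \<union> (E - Inr ` ev R1), map_act Inr a) | X1 Y1 a.
                X1 \<subseteq> ev R1 \<and> Y1 \<subseteq> ev R1 \<and> (X1, Y1, a) \<in> en R1} \<rparr>)"

definition inj0 :: "'a res \<Rightarrow> 'a \<Rightarrow> ('a + 'b) option" where
  "inj0 R0 x = (if x \<in> ev R0 then Some (Inl x) else None)"

definition inj1 :: "'b res \<Rightarrow> 'b \<Rightarrow> ('a + 'b) option" where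
  "inj1 R1 x = (if x \<in> ev R1 then Some (Inr x) else None)"

end

theory Submission
  imports Defs
begin

lemma ev_sum[simp]: "ev (sum_res R0 R1) = Inl ` ev R0 \<union> Inr ` ev R1"
  by (simp add: sum_res_def Let_def)
lemma con_sum[simp]: "con (sum_res R0 R1) = {Inl ` X0 | X0. X0 \<in> con R0} \<union> {Inr ` X1 | X1. X1 \<in> con R1}"
  by (simp add: sum_res_def Let_def)
lemma en_sum: "en (sum_res R0 R1) =
  (let E = Inl ` ev R0 \<union> Inr ` ev R1 in
    {(Inl ` X0, Inl ` Y0 \<union> (E - Inl ` ev R0), map_act Inl a) | X0 Y0 a.
                X0 \<subseteq> ev R0 \<and> Y0 \<subseteq> ev R0 \<and> (X0, Y0, a) \<in> en R0}
          \<union> {(Inr ` X1, Inr ` Y1 \<union> (E - Inr ` ev R1), map_act Inr a) | X1 Y1 a.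
                X1 \<subseteq> ev R1 \<and> Y1 \<subseteq> ev R1 \<and> (X1, Y1, a) \<in> en R1})"
  by (simp add: sum_res_def Let_def)

lemma act_ev_map[simp]: "act_ev (map_act f a) = f (act_ev a)"
  by (cases a) auto

lemma subset_Inl: "Z \<subseteq> Inl ` X \<Longrightarrow> Z = Inl ` {x. Inl x \<in> Z}" by auto
lemma subset_Inr: "Z \<subseteq> Inr ` X \<Longrightarrow> Z = Inr ` {x. Inr x \<in> Z}" by auto

lemma resD: assumes "is_res R"
  shows "(\<forall>X\<in>con R. finite X \<and> X \<subseteq> ev R)"
     "(\<forall>X\<in>con R. \<forall>Z. Z \<subseteq> X \<longrightarrow> Z \<in> con R)"
     "(\<forall>X Y a. (X, Y, a) \<in> en R \<longrightarrow> X \<in> con R \<and> Y \<subseteq> ev R \<and> act_ev a \<in> ev R)"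
     "(\<forall>X Y a. (X, Y, a) \<in> en R \<longrightarrow> (X \<union> {act_ev a}) \<inter> Y = {})"
     "(\<forall>X Y e. (X, Y, Rev e) \<in> en R \<longrightarrow> e \<in> X)"
     "(\<forall>X Y a X'. (X, Y, a) \<in> en R \<longrightarrow> X \<subseteq> X' \<longrightarrow> X' \<in> con R \<longrightarrow> X' \<inter> Y = {}
        \<longrightarrow> (X', Y, a) \<in> en R)"
  using assms[unfolded is_res_def] by - (elim conjE; assumption)+

lemma resA1: "is_res R \<Longrightarrow> X \<in> con R \<Longrightarrow> finite X \<and> X \<subseteq> ev R"
  using resD(1) by blast
lemma resA2: "is_res R \<Longrightarrow> X \<in> con R \<Longrightarrow> Z \<subseteq> X \<Longrightarrow> Z \<in> con R"
  using resD(2) by blast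
lemma resA3: "is_res R \<Longrightarrow> (X, Y, a) \<in> en R \<Longrightarrow> X \<in> con R \<and> Y \<subseteq> ev R \<and> act_ev a \<in> ev R"
  using resD(3) by blast
lemma resA4: "is_res R \<Longrightarrow> (X, Y, a) \<in> en R \<Longrightarrow> (X \<union> {act_ev a}) \<inter> Y = {}"
  using resD(4) by blast
lemma resA5: "is_res R \<Longrightarrow> (X, Y, Rev e) \<in> en R \<Longrightarrow> e \<in> X"
  using resD(5) by blast
lemma resA6: "is_res R \<Longrightarrow> (X, Y, a) \<in> en R \<Longrightarrow> X \<subseteq> X' \<Longrightarrow> X' \<in> con R \<Longrightarrow> X' \<inter> Y = {} \<Longrightarrow> (X', Y, a) \<in> en R"
  using resD(6) by blast

lemma is_resI:
  assumes "\<forall>X\<in>con R. finite X \<and> X \<subseteq> ev R"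
     "\<forall>X\<in>con R. \<forall>Z. Z \<subseteq> X \<longrightarrow> Z \<in> con R"
     "\<forall>X Y a. (X, Y, a) \<in> en R \<longrightarrow> X \<in> con R \<and> Y \<subseteq> ev R \<and> act_ev a \<in> ev R"
     "\<forall>X Y a. (X, Y, a) \<in> en R \<longrightarrow> (X \<union> {act_ev a}) \<inter> Y = {}"
     "\<forall>X Y e. (X, Y, Rev e) \<in> en R \<longrightarrow> e \<in> X"
     "\<forall>X Y a X'. (X, Y, a) \<in> en R \<longrightarrow> X \<subseteq> X' \<longrightarrow> X' \<in> con R \<longrightarrow> X' \<inter> Y = {}
        \<longrightarrow> (X', Y, a) \<in> en R"
  shows "is_res R"
  unfolding is_res_def by (rule conjI assms)+

lemma is_res_sum:
  assumes A: "is_res R0" "is_res R1"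
  shows "is_res (sum_res R0 R1)"
proof -

  have c1: "\<forall>X\<in>con (sum_res R0 R1). finite X \<and> X \<subseteq> ev (sum_res R0 R1)"
  proof
    fix X assume "X \<in> con (sum_res R0 R1)"
    then consider X0 where "X = Inl ` X0" "X0 \<in> con R0" | X1 where "X = Inr ` X1" "X1 \<in> con R1" by auto
    then show "finite X \<and> X \<subseteq> ev (sum_res R0 R1)"
    proof cases
      case 1
      have "finite X0" "X0 \<subseteq> ev R0" using resA1[OF A(1) 1(2)] by blast+
      then show ?thesis using 1 by auto
    next
      case 2
      have "finite X1" "X1 \<subseteq> ev R1" using resA1[OF A(2) 2(2)] by blast+
      then show ?thesis using 2 by auto
    qed
  qed
  have c2: "\<forall>X\<in>con (sum_res R0 R1). \<forall>Z. Z \<subseteq> X \<longrightarrow> Z \<in> con (sum_res R0 R1)"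
  proof (intro ballI allI impI)
    fix X Z assume "X \<in> con (sum_res R0 R1)" "Z \<subseteq> X"
    then consider X0 where "X = Inl ` X0" "X0 \<in> con R0" | X1 where "X = Inr ` X1" "X1 \<in> con R1" by auto
    then show "Z \<in> con (sum_res R0 R1)"
    proof cases
      case 1
      hence "Z = Inl ` {x. Inl x \<in> Z}" "{x. Inl x \<in> Z} \<subseteq> X0" using \<open>Z \<subseteq> X\<close> by auto
      moreover have "{x. Inl x \<in> Z} \<in> con R0" using resA2[OF A(1) 1(2)] calculation(2) .
      ultimately show ?thesis unfolding con_sum by blast
    next
      case 2
      hence "Z = Inr ` {x. Inr x \<in> Z}" "{x. Inr x \<in> Z} \<subseteq> X1" using \<open>Z \<subseteq> X\<close> by auto
      moreover have "{x. Inr x \<in> Z} \<in> con R1" using resA2[OF A(2) 2(2)] calculation(2) .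
      ultimately show ?thesis unfolding con_sum by blast
    qed
  qed
  have c3: "\<forall>X Y a. (X, Y, a) \<in> en (sum_res R0 R1) \<longrightarrow> X \<in> con (sum_res R0 R1) \<and> Y \<subseteq> ev (sum_res R0 R1) \<and> act_ev a \<in> ev (sum_res R0 R1)"
  proof (intro allI impI)
    fix X Y a assume "(X, Y, a) \<in> en (sum_res R0 R1)"
    then show "X \<in> con (sum_res R0 R1) \<and> Y \<subseteq> ev (sum_res R0 R1) \<and> act_ev a \<in> ev (sum_res R0 R1)"
      unfolding en_sum Let_def
    proof (elim UnE CollectE exE conjE)
      fix X0 Y0 b assume h: "(X, Y, a) = (Inl ` X0, Inl ` Y0 \<union> (Inl ` ev R0 \<union> Inr ` ev R1 - Inl ` ev R0), map_act Inl b)"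
        "X0 \<subseteq> ev R0" "Y0 \<subseteq> ev R0" "(X0, Y0, b) \<in> en R0"
      have "X0 \<in> con R0" "act_ev b \<in> ev R0" using resA3[OF A(1) h(4)] by auto
      then show ?thesis using h(1,3) by auto
    next
      fix X0 Y0 b assume h: "(X, Y, a) = (Inr ` X0, Inr ` Y0 \<union> (Inl ` ev R0 \<union> Inr ` ev R1 - Inr ` ev R1), map_act Inr b)"
        "X0 \<subseteq> ev R1" "Y0 \<subseteq> ev R1" "(X0, Y0, b) \<in> en R1"
      have "X0 \<in> con R1" "act_ev b \<in> ev R1" using resA3[OF A(2) h(4)] by auto
      then show ?thesis using h(1,3) by auto
    qed
  qed
  have c4: "\<forall>X Y a. (X, Y, a) \<in> en (sum_res R0 R1) \<longrightarrow> (X \<union> {act_ev a}) \<inter> Y = {}"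
  proof (intro allI impI)
    fix X Y a assume "(X, Y, a) \<in> en (sum_res R0 R1)"
    then show "(X \<union> {act_ev a}) \<inter> Y = {}"
      unfolding en_sum Let_def
    proof (elim UnE CollectE exE conjE)
      fix X0 Y0 b assume h: "(X, Y, a) = (Inl ` X0, Inl ` Y0 \<union> (Inl ` ev R0 \<union> Inr ` ev R1 - Inl ` ev R0), map_act Inl b)"
        "X0 \<subseteq> ev R0" "Y0 \<subseteq> ev R0" "(X0, Y0, b) \<in> en R0"
      have "(X0 \<union> {act_ev b}) \<inter> Y0 = {}" using resA4[OF A(1) h(4)] .
      then show ?thesis using h(1,2,3) by auto
    next
      fix X0 Y0 b assume h: "(X, Y, a) = (Inr ` X0, Inr ` Y0 \<union> (Inl ` ev R0 \<union> Inr ` ev R1 - Inr ` ev R1), map_act Inr b)"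
        "X0 \<subseteq> ev R1" "Y0 \<subseteq> ev R1" "(X0, Y0, b) \<in> en R1"
      have "(X0 \<union> {act_ev b}) \<inter> Y0 = {}" using resA4[OF A(2) h(4)] .
      then show ?thesis using h(1,2,3) by auto
    qed
  qed
  have c5: "\<forall>X Y e. (X, Y, Rev e) \<in> en (sum_res R0 R1) \<longrightarrow> e \<in> X"
  proof (intro allI impI)
    fix X Y e assume "(X, Y, Rev e) \<in> en (sum_res R0 R1)"
    then show "e \<in> X"
      unfolding en_sum Let_def
    proof (elim UnE CollectE exE conjE)
      fix X0 Y0 b assume h: "(X, Y, Rev e) = (Inl ` X0, Inl ` Y0 \<union> (Inl ` ev R0 \<union> Inr ` ev R1 - Inl ` ev R0), map_act Inl b)"
        "X0 \<subseteq> ev R0" "Y0 \<subseteq> ev R0" "(X0, Y0, b) \<in> en R0"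
      then obtain x where "b = Rev x" "e = Inl x" by (cases b) auto
      then show ?thesis using resA5[OF A(1)] h by auto
    next
      fix X0 Y0 b assume h: "(X, Y, Rev e) = (Inr ` X0, Inr ` Y0 \<union> (Inl ` ev R0 \<union> Inr ` ev R1 - Inr ` ev R1), map_act Inr b)"
        "X0 \<subseteq> ev R1" "Y0 \<subseteq> ev R1" "(X0, Y0, b) \<in> en R1"
      then obtain x where "b = Rev x" "e = Inr x" by (cases b) auto
      then show ?thesis using resA5[OF A(2)] h by auto
    qed
  qed
  have c6: "\<forall>X Y a X'. (X, Y, a) \<in> en (sum_res R0 R1) \<longrightarrow> X \<subseteq> X' \<longrightarrow> X' \<in> con (sum_res R0 R1) \<longrightarrow> X' \<inter> Y = {}
        \<longrightarrow> (X', Y, a) \<in> en (sum_res R0 R1)"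
  proof (intro allI impI)
    fix X Y a X' assume e: "(X, Y, a) \<in> en (sum_res R0 R1)" and s: "X \<subseteq> X'" and cx: "X' \<in> con (sum_res R0 R1)"
      and dj: "X' \<inter> Y = {}"
    from e[unfolded en_sum Let_def] show "(X', Y, a) \<in> en (sum_res R0 R1)"
    proof (elim UnE CollectE exE conjE)
      fix X0 Y0 b assume h: "(X, Y, a) = (Inl ` X0, Inl ` Y0 \<union> (Inl ` ev R0 \<union> Inr ` ev R1 - Inl ` ev R0), map_act Inl b)"
        "X0 \<subseteq> ev R0" "Y0 \<subseteq> ev R0" "(X0, Y0, b) \<in> en R0"
      obtain X0' where X': "X' = Inl ` X0'" "X0' \<in> con R0"
      proof -
        from cx consider X0' where "X' = Inl ` X0'" "X0' \<in> con R0" | X1 where "X' = Inr ` X1" "X1 \<in> con R1" by auto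
        then show ?thesis
        proof cases
          case 1 then show ?thesis using that by blast
        next
          case 2
          have "X1 \<subseteq> ev R1" using resA1[OF A(2) 2(2)] by blast
          hence "X1 = {}" using 2 dj h by auto
          hence "X' = Inl ` {}" using 2 by simp
          moreover have "{} \<in> con R0" using resA2[OF A(1) conjunct1[OF resA3[OF A(1) h(4)]]] by blast
          ultimately show ?thesis using that by blast
        qed
      qed
      have "X0 \<subseteq> X0'" using s h X' by auto
      moreover have "X0' \<inter> Y0 = {}" using dj h X' by auto
      ultimately have "(X0', Y0, b) \<in> en R0" using resA6[OF A(1) h(4)] X'(2) by blast
      moreover have "X0' \<subseteq> ev R0" using resA1[OF A(1) X'(2)] by blast
      moreover have "Y = Inl ` Y0 \<union> (Inl ` ev R0 \<union> Inr ` ev R1 - Inl ` ev R0)" "a = map_act Inl b" using h(1) by auto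
      ultimately show ?thesis unfolding en_sum Let_def
        apply (intro UnI1)
        apply (simp only: mem_Collect_eq)
        apply (rule exI[of _ X0'], rule exI[of _ Y0], rule exI[of _ b])
        using X'(1) h(3) by simp
    next
      fix X0 Y0 b assume h: "(X, Y, a) = (Inr ` X0, Inr ` Y0 \<union> (Inl ` ev R0 \<union> Inr ` ev R1 - Inr ` ev R1), map_act Inr b)"
        "X0 \<subseteq> ev R1" "Y0 \<subseteq> ev R1" "(X0, Y0, b) \<in> en R1"
      obtain X0' where X': "X' = Inr ` X0'" "X0' \<in> con R1"
      proof -
        from cx consider X0' where "X' = Inr ` X0'" "X0' \<in> con R1" | X1 where "X' = Inl ` X1" "X1 \<in> con R0" by auto
        then show ?thesis
        proof cases
          case 1 then show ?thesis using that by blast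
        next
          case 2
          have "X1 \<subseteq> ev R0" using resA1[OF A(1) 2(2)] by blast
          hence "X1 = {}" using 2 dj h by auto
          hence "X' = Inr ` {}" using 2 by simp
          moreover have "{} \<in> con R1" using resA2[OF A(2) conjunct1[OF resA3[OF A(2) h(4)]]] by blast
          ultimately show ?thesis using that by blast
        qed
      qed
      have "X0 \<subseteq> X0'" using s h X' by auto
      moreover have "X0' \<inter> Y0 = {}" using dj h X' by auto
      ultimately have "(X0', Y0, b) \<in> en R1" using resA6[OF A(2) h(4)] X'(2) by blast
      moreover have "X0' \<subseteq> ev R1" using resA1[OF A(2) X'(2)] by blast
      moreover have "Y = Inr ` Y0 \<union> (Inl ` ev R0 \<union> Inr ` ev R1 - Inr ` ev R1)" "a = map_act Inr b" using h(1) by auto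
      ultimately show ?thesis unfolding en_sum Let_def
        apply (intro UnI2)
        apply (simp only: mem_Collect_eq)
        apply (rule exI[of _ X0'], rule exI[of _ Y0], rule exI[of _ b])
        using X'(1) h(3) by simp
    qed
  qed
  show ?thesis by (rule is_resI[OF c1 c2 c3 c4 c5 c6])
qed

lemma morphD: assumes "res_morph R0 R1 f"
  shows "\<forall>x. x \<notin> ev R0 \<longrightarrow> f x = None"
     "\<forall>x y. f x = Some y \<longrightarrow> y \<in> ev R1"
     "\<forall>X Y a. (X, Y, a) \<in> en R0 \<longrightarrow> f (act_ev a) \<noteq> None \<longrightarrow>
        (\<exists>Y1. Y1 \<subseteq> ev R1 \<and>
              (\<forall>e0\<in>ev R0. (\<exists>y\<in>Y1. f e0 = Some y) \<longrightarrow> e0 \<in> Y) \<and>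
              (pimg f X, Y1, act_img f a) \<in> en R1)"
     "\<forall>X0\<in>con R0. pimg f X0 \<in> con R1"
     "\<forall>e e'. f e = f e' \<longrightarrow> f e \<noteq> None \<longrightarrow> e \<noteq> e' \<longrightarrow>
        \<not> (\<exists>X\<in>con R0. e \<in> X \<and> e' \<in> X)"
  using assms[unfolded res_morph_def] by - (elim conjE; assumption)+

lemma morphI:
  assumes "\<forall>x. x \<notin> ev R0 \<longrightarrow> f x = None"
     "\<forall>x y. f x = Some y \<longrightarrow> y \<in> ev R1"
     "\<forall>X Y a. (X, Y, a) \<in> en R0 \<longrightarrow> f (act_ev a) \<noteq> None \<longrightarrow>
        (\<exists>Y1. Y1 \<subseteq> ev R1 \<and>
              (\<forall>e0\<in>ev R0. (\<exists>y\<in>Y1. f e0 = Some y) \<longrightarrow> e0 \<in> Y) \<and>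
              (pimg f X, Y1, act_img f a) \<in> en R1)"
     "\<forall>X0\<in>con R0. pimg f X0 \<in> con R1"
     "\<forall>e e'. f e = f e' \<longrightarrow> f e \<noteq> None \<longrightarrow> e \<noteq> e' \<longrightarrow>
        \<not> (\<exists>X\<in>con R0. e \<in> X \<and> e' \<in> X)"
  shows "res_morph R0 R1 f"
  unfolding res_morph_def by (rule conjI assms)+

lemma pimg_inj0: "X \<subseteq> ev R0 \<Longrightarrow> pimg (inj0 R0) X = Inl ` X"
  unfolding pimg_def inj0_def by auto
lemma pimg_inj1: "X \<subseteq> ev R1 \<Longrightarrow> pimg (inj1 R1) X = Inr ` X"
  unfolding pimg_def inj1_def by auto
lemma act_img_inj0: "act_ev a \<in> ev R0 \<Longrightarrow> act_img (inj0 R0) a = map_act Inl a"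
  unfolding act_img_def inj0_def by (cases a) auto
lemma act_img_inj1: "act_ev a \<in> ev R1 \<Longrightarrow> act_img (inj1 R1) a = map_act Inr a"
  unfolding act_img_def inj1_def by (cases a) auto

lemma inj0_morph:
  assumes A: "is_res R0"
  shows "res_morph R0 (sum_res R0 R1) (inj0 R0 :: 'a \<Rightarrow> ('a + 'b) option)"
proof (rule morphI)
  show "\<forall>x. x \<notin> ev R0 \<longrightarrow> inj0 R0 x = None" by (simp add: inj0_def)
  show "\<forall>x y. inj0 R0 x = Some y \<longrightarrow> y \<in> ev (sum_res R0 R1)" by (simp add: inj0_def)
  show "\<forall>X0\<in>con R0. pimg (inj0 R0) X0 \<in> con (sum_res R0 R1)"
  proof
    fix X0 assume "X0 \<in> con R0"
    moreover have "X0 \<subseteq> ev R0" using resA1[OF A calculation] by blast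
    ultimately show "pimg (inj0 R0) X0 \<in> con (sum_res R0 R1)" by (auto simp: pimg_inj0)
  qed
  show "\<forall>e e'. inj0 R0 e = inj0 R0 e' \<longrightarrow> inj0 R0 e \<noteq> None \<longrightarrow> e \<noteq> e' \<longrightarrow>
        \<not> (\<exists>X\<in>con R0. e \<in> X \<and> e' \<in> X)" by (simp add: inj0_def)
  show "\<forall>X Y a. (X, Y, a) \<in> en R0 \<longrightarrow> inj0 R0 (act_ev a) \<noteq> None \<longrightarrow>
        (\<exists>Y1. Y1 \<subseteq> ev (sum_res R0 R1) \<and>
              (\<forall>e0\<in>ev R0. (\<exists>y\<in>Y1. inj0 R0 e0 = Some y) \<longrightarrow> e0 \<in> Y) \<and>
              (pimg (inj0 R0) X, Y1, act_img (inj0 R0) a) \<in> en (sum_res R0 R1))"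
  proof (intro allI impI)
    fix X Y a assume e: "(X, Y, a) \<in> en R0"
    have X: "X \<subseteq> ev R0" "Y \<subseteq> ev R0" "act_ev a \<in> ev R0"
      using resA3[OF A e] resA1[OF A] by blast+
    define Y1 where "Y1 = Inl ` Y \<union> ((Inl ` ev R0 \<union> Inr ` ev R1) - Inl ` ev R0)"
    have "Y1 \<subseteq> ev (sum_res R0 R1)" unfolding Y1_def using X by auto
    moreover have "\<forall>e0\<in>ev R0. (\<exists>y\<in>Y1. inj0 R0 e0 = Some y) \<longrightarrow> e0 \<in> Y"
      unfolding Y1_def inj0_def by auto
    moreover have "(pimg (inj0 R0) X, Y1, act_img (inj0 R0) a) \<in> en (sum_res R0 R1)"
      unfolding pimg_inj0[OF X(1)] act_img_inj0[OF X(3)] en_sum Let_def Y1_def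
      apply (intro UnI1)
      apply (simp only: mem_Collect_eq)
      apply (rule exI[of _ X], rule exI[of _ Y], rule exI[of _ a])
      using X e by simp
    ultimately show "\<exists>Y1. Y1 \<subseteq> ev (sum_res R0 R1) \<and>
              (\<forall>e0\<in>ev R0. (\<exists>y\<in>Y1. inj0 R0 e0 = Some y) \<longrightarrow> e0 \<in> Y) \<and>
              (pimg (inj0 R0) X, Y1, act_img (inj0 R0) a) \<in> en (sum_res R0 R1)" by blast
  qed
qed

lemma inj1_morph:
  assumes A: "is_res R1"
  shows "res_morph R1 (sum_res R0 R1) (inj1 R1 :: 'b \<Rightarrow> ('a + 'b) option)"
proof (rule morphI)
  show "\<forall>x. x \<notin> ev R1 \<longrightarrow> inj1 R1 x = None" by (simp add: inj1_def)
  show "\<forall>x y. inj1 R1 x = Some y \<longrightarrow> y \<in> ev (sum_res R0 R1)" by (simp add: inj1_def)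
  show "\<forall>X0\<in>con R1. pimg (inj1 R1) X0 \<in> con (sum_res R0 R1)"
  proof
    fix X0 assume "X0 \<in> con R1"
    moreover have "X0 \<subseteq> ev R1" using resA1[OF A calculation] by blast
    ultimately show "pimg (inj1 R1) X0 \<in> con (sum_res R0 R1)" by (auto simp: pimg_inj1)
  qed
  show "\<forall>e e'. inj1 R1 e = inj1 R1 e' \<longrightarrow> inj1 R1 e \<noteq> None \<longrightarrow> e \<noteq> e' \<longrightarrow>
        \<not> (\<exists>X\<in>con R1. e \<in> X \<and> e' \<in> X)" by (simp add: inj1_def)
  show "\<forall>X Y a. (X, Y, a) \<in> en R1 \<longrightarrow> inj1 R1 (act_ev a) \<noteq> None \<longrightarrow>
        (\<exists>Y1. Y1 \<subseteq> ev (sum_res R0 R1) \<and>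
              (\<forall>e0\<in>ev R1. (\<exists>y\<in>Y1. inj1 R1 e0 = Some y) \<longrightarrow> e0 \<in> Y) \<and>
              (pimg (inj1 R1) X, Y1, act_img (inj1 R1) a) \<in> en (sum_res R0 R1))"
  proof (intro allI impI)
    fix X Y a assume e: "(X, Y, a) \<in> en R1"
    have X: "X \<subseteq> ev R1" "Y \<subseteq> ev R1" "act_ev a \<in> ev R1"
      using resA3[OF A e] resA1[OF A] by blast+
    define Y1 where "Y1 = Inr ` Y \<union> ((Inl ` ev R0 \<union> Inr ` ev R1) - Inr ` ev R1)"
    have "Y1 \<subseteq> ev (sum_res R0 R1)" unfolding Y1_def using X by auto
    moreover have "\<forall>e0\<in>ev R1. (\<exists>y\<in>Y1. inj1 R1 e0 = Some y) \<longrightarrow> e0 \<in> Y"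
      unfolding Y1_def inj1_def by auto
    moreover have "(pimg (inj1 R1) X, Y1, act_img (inj1 R1) a) \<in> en (sum_res R0 R1)"
      unfolding pimg_inj1[OF X(1)] act_img_inj1[OF X(3)] en_sum Let_def Y1_def
      apply (intro UnI2)
      apply (simp only: mem_Collect_eq)
      apply (rule exI[of _ X], rule exI[of _ Y], rule exI[of _ a])
      using X e by simp
    ultimately show "\<exists>Y1. Y1 \<subseteq> ev (sum_res R0 R1) \<and>
              (\<forall>e0\<in>ev R1. (\<exists>y\<in>Y1. inj1 R1 e0 = Some y) \<longrightarrow> e0 \<in> Y) \<and>
              (pimg (inj1 R1) X, Y1, act_img (inj1 R1) a) \<in> en (sum_res R0 R1)" by blast
  qed
qed

lemma pimg_case_Inl: "pimg (case_sum f0 f1) (Inl ` X) = pimg f0 X"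
  unfolding pimg_def by auto
lemma pimg_case_Inr: "pimg (case_sum f0 f1) (Inr ` X) = pimg f1 X"
  unfolding pimg_def by auto
lemma act_img_case_Inl: "act_img (case_sum f0 f1) (map_act Inl b) = act_img f0 b"
  unfolding act_img_def by (cases b) auto
lemma act_img_case_Inr: "act_img (case_sum f0 f1) (map_act Inr b) = act_img f1 b"
  unfolding act_img_def by (cases b) auto

lemma comp_inj0: "res_morph R0 R2 f0 \<Longrightarrow> h \<circ>\<^sub>m inj0 R0 = f0 \<longleftrightarrow> (\<forall>x\<in>ev R0. h (Inl x) = f0 x)"
  using morphD(1)[of R0 R2 f0] unfolding map_comp_def inj0_def
  by (auto simp: fun_eq_iff split: option.splits)
lemma comp_inj1: "res_morph R1 R2 f1 \<Longrightarrow> h \<circ>\<^sub>m inj1 R1 = f1 \<longleftrightarrow> (\<forall>x\<in>ev R1. h (Inr x) = f1 x)"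
  using morphD(1)[of R1 R2 f1] unfolding map_comp_def inj1_def
  by (auto simp: fun_eq_iff split: option.splits)

lemma case_morph:
  assumes m0: "res_morph R0 R2 f0" and m1: "res_morph R1 R2 f1"
  shows "res_morph (sum_res R0 R1) R2 (case_sum f0 f1)"
proof (rule morphI)
  note a0 = morphD[OF m0] and a1 = morphD[OF m1]
  show "\<forall>x. x \<notin> ev (sum_res R0 R1) \<longrightarrow> case_sum f0 f1 x = None"
  proof (intro allI impI)
    fix x assume "x \<notin> ev (sum_res R0 R1)"
    then show "case_sum f0 f1 x = None" using a0(1) a1(1) by (cases x) auto
  qed
  show "\<forall>x y. case_sum f0 f1 x = Some y \<longrightarrow> y \<in> ev R2"
  proof (intro allI impI)
    fix x y assume "case_sum f0 f1 x = Some y"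
    then show "y \<in> ev R2" using a0(2) a1(2) by (cases x) auto
  qed
  show "\<forall>X0\<in>con (sum_res R0 R1). pimg (case_sum f0 f1) X0 \<in> con R2"
  proof
    fix X assume "X \<in> con (sum_res R0 R1)"
    then consider X0 where "X = Inl ` X0" "X0 \<in> con R0" | X1 where "X = Inr ` X1" "X1 \<in> con R1" by auto
    then show "pimg (case_sum f0 f1) X \<in> con R2"
    proof cases
      case 1 then show ?thesis using a0(4) by (simp add: pimg_case_Inl)
    next
      case 2 then show ?thesis using a1(4) by (simp add: pimg_case_Inr)
    qed
  qed
  show "\<forall>e e'. case_sum f0 f1 e = case_sum f0 f1 e' \<longrightarrow> case_sum f0 f1 e \<noteq> None \<longrightarrow> e \<noteq> e' \<longrightarrow>
        \<not> (\<exists>X\<in>con (sum_res R0 R1). e \<in> X \<and> e' \<in> X)"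
  proof (intro allI impI notI)
    fix e e' assume q: "case_sum f0 f1 e = case_sum f0 f1 e'" "case_sum f0 f1 e \<noteq> None" "e \<noteq> e'"
      and "\<exists>X\<in>con (sum_res R0 R1). e \<in> X \<and> e' \<in> X"
    then obtain X where X: "X \<in> con (sum_res R0 R1)" "e \<in> X" "e' \<in> X" by blast
    from X(1) consider X0 where "X = Inl ` X0" "X0 \<in> con R0" | X1 where "X = Inr ` X1" "X1 \<in> con R1" by auto
    then show False
    proof cases
      case 1
      then obtain x x' where "e = Inl x" "e' = Inl x'" "x \<in> X0" "x' \<in> X0" using X by auto
      then have "f0 x = f0 x'" "f0 x \<noteq> None" "x \<noteq> x'" "\<exists>X\<in>con R0. x \<in> X \<and> x' \<in> X"
        using q 1(2) by auto
      then show False using a0(5) by blast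
    next
      case 2
      then obtain x x' where "e = Inr x" "e' = Inr x'" "x \<in> X1" "x' \<in> X1" using X by auto
      then have "f1 x = f1 x'" "f1 x \<noteq> None" "x \<noteq> x'" "\<exists>X\<in>con R1. x \<in> X \<and> x' \<in> X"
        using q 2(2) by auto
      then show False using a1(5) by blast
    qed
  qed
  show "\<forall>X Y a. (X, Y, a) \<in> en (sum_res R0 R1) \<longrightarrow> case_sum f0 f1 (act_ev a) \<noteq> None \<longrightarrow>
        (\<exists>Y1. Y1 \<subseteq> ev R2 \<and>
              (\<forall>e0\<in>ev (sum_res R0 R1). (\<exists>y\<in>Y1. case_sum f0 f1 e0 = Some y) \<longrightarrow> e0 \<in> Y) \<and>
              (pimg (case_sum f0 f1) X, Y1, act_img (case_sum f0 f1) a) \<in> en R2)"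
  proof (intro allI impI)
    fix X Y a assume e: "(X, Y, a) \<in> en (sum_res R0 R1)" and nn: "case_sum f0 f1 (act_ev a) \<noteq> None"
    from e[unfolded en_sum Let_def]
    show "\<exists>Y1. Y1 \<subseteq> ev R2 \<and>
              (\<forall>e0\<in>ev (sum_res R0 R1). (\<exists>y\<in>Y1. case_sum f0 f1 e0 = Some y) \<longrightarrow> e0 \<in> Y) \<and>
              (pimg (case_sum f0 f1) X, Y1, act_img (case_sum f0 f1) a) \<in> en R2"
    proof (elim UnE CollectE exE conjE)
      fix X0 Y0 b assume h: "(X, Y, a) = (Inl ` X0, Inl ` Y0 \<union> (Inl ` ev R0 \<union> Inr ` ev R1 - Inl ` ev R0), map_act Inl b)"
        "X0 \<subseteq> ev R0" "Y0 \<subseteq> ev R0" "(X0, Y0, b) \<in> en R0"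
      have hX: "X = Inl ` X0" and hY: "Y = Inl ` Y0 \<union> (Inl ` ev R0 \<union> Inr ` ev R1 - Inl ` ev R0)"
        and ha: "a = map_act Inl b" using h(1) by auto
      have "f0 (act_ev b) \<noteq> None" using nn ha by simp
      then obtain Y1 where Y1: "Y1 \<subseteq> ev R2" "\<forall>e0\<in>ev R0. (\<exists>y\<in>Y1. f0 e0 = Some y) \<longrightarrow> e0 \<in> Y0"
        "(pimg f0 X0, Y1, act_img f0 b) \<in> en R2" using a0(3)[rule_format, OF h(4) \<open>f0 (act_ev b) \<noteq> None\<close>] by blast
      have "\<forall>e0\<in>ev (sum_res R0 R1). (\<exists>y\<in>Y1. case_sum f0 f1 e0 = Some y) \<longrightarrow> e0 \<in> Y"
      proof (intro ballI impI)
        fix e0 assume "e0 \<in> ev (sum_res R0 R1)" "\<exists>y\<in>Y1. case_sum f0 f1 e0 = Some y"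
        then show "e0 \<in> Y" unfolding hY using Y1(2) by (cases e0) auto
      qed
      moreover have "(pimg (case_sum f0 f1) X, Y1, act_img (case_sum f0 f1) a) \<in> en R2"
        using Y1(3) unfolding hX ha pimg_case_Inl act_img_case_Inl .
      ultimately show ?thesis using Y1(1) by blast
    next
      fix X0 Y0 b assume h: "(X, Y, a) = (Inr ` X0, Inr ` Y0 \<union> (Inl ` ev R0 \<union> Inr ` ev R1 - Inr ` ev R1), map_act Inr b)"
        "X0 \<subseteq> ev R1" "Y0 \<subseteq> ev R1" "(X0, Y0, b) \<in> en R1"
      have hX: "X = Inr ` X0" and hY: "Y = Inr ` Y0 \<union> (Inl ` ev R0 \<union> Inr ` ev R1 - Inr ` ev R1)"
        and ha: "a = map_act Inr b" using h(1) by auto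
      have "f1 (act_ev b) \<noteq> None" using nn ha by simp
      then obtain Y1 where Y1: "Y1 \<subseteq> ev R2" "\<forall>e0\<in>ev R1. (\<exists>y\<in>Y1. f1 e0 = Some y) \<longrightarrow> e0 \<in> Y0"
        "(pimg f1 X0, Y1, act_img f1 b) \<in> en R2" using a1(3)[rule_format, OF h(4) \<open>f1 (act_ev b) \<noteq> None\<close>] by blast
      have "\<forall>e0\<in>ev (sum_res R0 R1). (\<exists>y\<in>Y1. case_sum f0 f1 e0 = Some y) \<longrightarrow> e0 \<in> Y"
      proof (intro ballI impI)
        fix e0 assume "e0 \<in> ev (sum_res R0 R1)" "\<exists>y\<in>Y1. case_sum f0 f1 e0 = Some y"
        then show "e0 \<in> Y" unfolding hY using Y1(2) by (cases e0) auto
      qed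
      moreover have "(pimg (case_sum f0 f1) X, Y1, act_img (case_sum f0 f1) a) \<in> en R2"
        using Y1(3) unfolding hX ha pimg_case_Inr act_img_case_Inr .
      ultimately show ?thesis using Y1(1) by blast
    qed
  qed
qed

lemma coprod:
  assumes m0: "res_morph R0 R2 f0" and m1: "res_morph R1 R2 f1"
  shows "\<exists>!h. res_morph (sum_res R0 R1) R2 h \<and> h \<circ>\<^sub>m inj0 R0 = f0 \<and> h \<circ>\<^sub>m inj1 R1 = f1"
proof (rule ex1I[of _ "case_sum f0 f1"])
  show "res_morph (sum_res R0 R1) R2 (case_sum f0 f1) \<and> case_sum f0 f1 \<circ>\<^sub>m inj0 R0 = f0 \<and> case_sum f0 f1 \<circ>\<^sub>m inj1 R1 = f1"
    by (simp add: case_morph[OF m0 m1] comp_inj0[OF m0] comp_inj1[OF m1])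
next
  fix h assume H: "res_morph (sum_res R0 R1) R2 h \<and> h \<circ>\<^sub>m inj0 R0 = f0 \<and> h \<circ>\<^sub>m inj1 R1 = f1"
  have n: "\<forall>x. x \<notin> ev (sum_res R0 R1) \<longrightarrow> h x = None" using morphD(1) H by blast
  have c0: "\<forall>x\<in>ev R0. h (Inl x) = f0 x" using comp_inj0[OF m0] H by blast
  have c1: "\<forall>x\<in>ev R1. h (Inr x) = f1 x" using comp_inj1[OF m1] H by blast
  show "h = case_sum f0 f1"
  proof
    fix z show "h z = case_sum f0 f1 z"
    proof (cases z)
      case (Inl x) then show ?thesis using n c0 morphD(1)[OF m0] by (cases "x \<in> ev R0") auto
    next
      case (Inr x) then show ?thesis using n c1 morphD(1)[OF m1] by (cases "x \<in> ev R1") auto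
    qed
  qed
qed

theorem mainTheorem7:
  fixes R0 :: "'a res" and R1 :: "'b res"
  assumes "is_res R0" and "is_res R1"
  shows "is_res (sum_res R0 R1)
    \<and> res_morph R0 (sum_res R0 R1) (inj0 R0 :: 'a \<Rightarrow> ('a + 'b) option)
    \<and> res_morph R1 (sum_res R0 R1) (inj1 R1 :: 'b \<Rightarrow> ('a + 'b) option)
    \<and> (\<forall>(R2 :: 'c res) f0 f1. is_res R2 \<and> res_morph R0 R2 f0 \<and> res_morph R1 R2 f1 \<longrightarrow>
          (\<exists>!h. res_morph (sum_res R0 R1) R2 h \<and> h \<circ>\<^sub>m inj0 R0 = f0 \<and> h \<circ>\<^sub>m inj1 R1 = f1))"
proof (intro conjI allI impI)
  show "is_res (sum_res R0 R1)" by (rule is_res_sum[OF assms])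
  show "res_morph R0 (sum_res R0 R1) (inj0 R0 :: 'a \<Rightarrow> ('a + 'b) option)" by (rule inj0_morph[OF assms(1)])
  show "res_morph R1 (sum_res R0 R1) (inj1 R1 :: 'b \<Rightarrow> ('a + 'b) option)" by (rule inj1_morph[OF assms(2)])
  fix R2 :: "'c res" and f0 f1
  assume H: "is_res R2 \<and> res_morph R0 R2 f0 \<and> res_morph R1 R2 f1"
  then have m0: "res_morph R0 R2 f0" and m1: "res_morph R1 R2 f1" by auto
  show "\<exists>!h. res_morph (sum_res R0 R1) R2 h \<and> h \<circ>\<^sub>m inj0 R0 = f0 \<and> h \<circ>\<^sub>m inj1 R1 = f1"
    by (rule coprod[OF m0 m1])
qed

end
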